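(* Let $(E,\|\cdot\|)$ be a finite-dimensional normed space over $K$ and let $D\subseteq E$ be a one-dimensional subspace. Then for each $f\in D'$ with $\|f\|=1$ there exists an extension $\tilde f\in E'$ of $f$ with $\|\tilde f\|=1$ if and only if either $\|D\|\cap V_K=\emptyset$, or there is a subspace $F\subseteq E$ such that $E\cong D\oplus F$ (i.e. $E=D+F$ and $\|d+u\|=\max(\|d\|,\|u\|)$ for all $d\in D$, $u\in F$).
   Context: $K$ is a complete non-archimedean non-trivially valued field which is not spherically complete, with valuation group $V_K=\{|x|:x\in K\setminus\{0\}\}$. Normed spaces are non-archimedean normed spaces over $K$; $E'$ is the dual with operator norm. $\|D\|=\{\|d\|:d\in D\}$. *)

theory Defs
  imports Complex_Main
begin

definition nonarch_abs :: "('k::field \<Rightarrow> real) \<Rightarrow> bool" where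
  "nonarch_abs a \<longleftrightarrow>
     (\<forall>x. a x \<ge> 0) \<and> (\<forall>x. a x = 0 \<longleftrightarrow> x = 0) \<and>
     (\<forall>x y. a (x * y) = a x * a y) \<and>
     (\<forall>x y. a (x + y) \<le> max (a x) (a y))"

definition nontrivial_abs :: "('k::field \<Rightarrow> real) \<Rightarrow> bool" where
  "nontrivial_abs a \<longleftrightarrow> (\<exists>x. a x \<noteq> 0 \<and> a x \<noteq> 1)"

definition complete_abs :: "('k::field \<Rightarrow> real) \<Rightarrow> bool" where
  "complete_abs a \<longleftrightarrow>
     (\<forall>X::nat \<Rightarrow> 'k.
        (\<forall>e>0. \<exists>M. \<forall>m\<ge>M. \<forall>n\<ge>M. a (X m - X n) < e) \<longrightarrow>
        (\<exists>L. \<forall>e>0. \<exists>M. \<forall>n\<ge>M. a (X n - L) < e))"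

definition closed_ball_abs :: "('k::field \<Rightarrow> real) \<Rightarrow> 'k \<Rightarrow> real \<Rightarrow> 'k set" where
  "closed_ball_abs a c r = {x. a (x - c) \<le> r}"

definition spherically_complete_abs :: "('k::field \<Rightarrow> real) \<Rightarrow> bool" where
  "spherically_complete_abs a \<longleftrightarrow>
     (\<forall>\<C>. \<C> \<noteq> {} \<and> (\<forall>B\<in>\<C>. \<exists>c r. r > 0 \<and> B = closed_ball_abs a c r) \<and>
          (\<forall>B1\<in>\<C>. \<forall>B2\<in>\<C>. B1 \<subseteq> B2 \<or> B2 \<subseteq> B1)
          \<longrightarrow> \<Inter>\<C> \<noteq> {})"

definition value_group :: "('k::field \<Rightarrow> real) \<Rightarrow> real set" where
  "value_group a = {a x | x. x \<noteq> 0}"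

definition nonarch_norm ::
  "('k::field \<Rightarrow> real) \<Rightarrow> ('k \<Rightarrow> 'e::ab_group_add \<Rightarrow> 'e) \<Rightarrow> ('e \<Rightarrow> real) \<Rightarrow> bool" where
  "nonarch_norm a scale N \<longleftrightarrow>
     (\<forall>x. N x \<ge> 0) \<and> (\<forall>x. N x = 0 \<longleftrightarrow> x = 0) \<and>
     (\<forall>c x. N (scale c x) = a c * N x) \<and>
     (\<forall>x y. N (x + y) \<le> max (N x) (N y))"

definition finite_dim_space :: "('k::field \<Rightarrow> 'e::ab_group_add \<Rightarrow> 'e) \<Rightarrow> bool" where
  "finite_dim_space scale \<longleftrightarrow> (\<exists>B. finite B \<and> module.span scale B = UNIV)"

text \<open>Linear functional on a subspace S (values outside S irrelevant).\<close>
definition linear_on ::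
  "('k::field \<Rightarrow> 'e::ab_group_add \<Rightarrow> 'e) \<Rightarrow> 'e set \<Rightarrow> ('e \<Rightarrow> 'k) \<Rightarrow> bool" where
  "linear_on scale S f \<longleftrightarrow>
     (\<forall>x\<in>S. \<forall>y\<in>S. f (x + y) = f x + f y) \<and> (\<forall>c. \<forall>x\<in>S. f (scale c x) = c * f x)"

definition dual_on ::
  "('k::field \<Rightarrow> real) \<Rightarrow> ('k \<Rightarrow> 'e::ab_group_add \<Rightarrow> 'e) \<Rightarrow> ('e \<Rightarrow> real) \<Rightarrow> 'e set \<Rightarrow> ('e \<Rightarrow> 'k) set" where
  "dual_on a scale N S = {f. linear_on scale S f \<and> (\<exists>C. \<forall>x\<in>S. a (f x) \<le> C * N x)}"

definition opnorm_on ::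
  "('k::field \<Rightarrow> real) \<Rightarrow> ('e::ab_group_add \<Rightarrow> real) \<Rightarrow> 'e set \<Rightarrow> ('e \<Rightarrow> 'k) \<Rightarrow> real" where
  "opnorm_on a N S f = Sup {a (f x) / N x | x. x \<in> S \<and> x \<noteq> 0}"

end

theory Submission
  imports Defs
begin

lemma na_basic:
  assumes "nonarch_abs a"
  shows "a 0 = 0" "a 1 = 1" "a (-1) = 1" "a (x*y) = a x * a y" "x \<noteq> 0 \<Longrightarrow> a x > 0"
    "a (- x) = a x"
proof -
  have nn: "\<And>x. a x \<ge> 0" and z: "\<And>x. a x = 0 \<longleftrightarrow> x = 0" and m: "\<And>x y. a (x*y) = a x * a y"
    using assms unfolding nonarch_abs_def by auto
  show "a 0 = 0" using z by simp
  show m': "a (x*y) = a x * a y" by (rule m)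
  have "a 1 = a 1 * a 1" using m[of 1 1] by simp
  moreover have "a 1 \<noteq> 0" using z by simp
  ultimately show a1: "a 1 = 1" by simp
  have "a (-1) * a (-1) = 1" using m[of "-1" "-1"] a1 by simp
  then have "(a (-1) - 1) * (a (-1) + 1) = 0" by (simp add: algebra_simps)
  moreover have "a (-1) + 1 \<noteq> 0" using nn[of "-1"] by linarith
  ultimately show am1: "a (-1) = 1" by simp
  show "x \<noteq> 0 \<Longrightarrow> a x > 0" using nn[of x] z[of x] by linarith
  show "a (- x) = a x" using m[of "-1" x] am1 by simp
qed

lemma norm_basic:
  assumes "vector_space scale" "nonarch_abs a" "nonarch_norm a scale N"
  shows "N (scale k x) = a k * N x" "N (- x) = N x" "N (x + y) \<le> max (N x) (N y)"
    "N 0 = 0" "x \<noteq> 0 \<Longrightarrow> N x > 0"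
proof -
  interpret V: vector_space scale by fact
  have nn: "\<And>x. N x \<ge> 0" and z: "\<And>x. N x = 0 \<longleftrightarrow> x = 0"
    and sc: "\<And>c x. N (scale c x) = a c * N x" and ul: "\<And>x y. N (x + y) \<le> max (N x) (N y)"
    using assms(3) unfolding nonarch_norm_def by auto
  show "N (scale k x) = a k * N x" by (rule sc)
  show "N (- x) = N x" using sc[of "-1" x] na_basic(3)[OF assms(2)] by simp
  show "N (x + y) \<le> max (N x) (N y)" by (rule ul)
  show "N 0 = 0" using z by simp
  show "x \<noteq> 0 \<Longrightarrow> N x > 0" using nn[of x] z[of x] by linarith
qed

lemma line_facts:
  assumes V: "vector_space scale" and A: "nonarch_abs a" and NN: "nonarch_norm a scale N"
    and De: "D = range (\<lambda>k. scale k e)" and e: "e \<noteq> 0" and f: "linear_on scale D f"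
  shows "\<forall>x\<in>D. a (f x) * N e = a (f e) * N x"
    and "opnorm_on a N D f = a (f e) / N e"
proof -
  interpret V: vector_space scale by fact
  have fs: "\<And>c x. x \<in> D \<Longrightarrow> f (scale c x) = c * f x" using f unfolding linear_on_def by auto
  have eD: "e \<in> D" using De by (metis V.scale_one rangeI)
  have key: "a (f x) * N e = a (f e) * N x" if xD: "x \<in> D" for x
  proof -
    obtain k where k: "x = scale k e" using xD De by auto
    have "f x = k * f e" using fs[OF eD] k by simp
    then show ?thesis using k norm_basic(1)[OF V A NN] na_basic(4)[OF A] by simp
  qed
  then show "\<forall>x\<in>D. a (f x) * N e = a (f e) * N x" by blast
  have Ne: "N e > 0" using norm_basic(5)[OF V A NN e] .
  have "{a (f x) / N x | x. x \<in> D \<and> x \<noteq> 0} = {a (f e) / N e}"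
  proof (intro equalityI subsetI)
    fix y assume "y \<in> {a (f x) / N x | x. x \<in> D \<and> x \<noteq> 0}"
    then obtain x where x: "x \<in> D" "x \<noteq> 0" "y = a (f x) / N x" by auto
    have "N x > 0" using norm_basic(5)[OF V A NN x(2)] .
    have "y * N e = (a (f x) * N e) / N x" using x(3) by simp
    also have "\<dots> = a (f e) * N x / N x" using key[OF x(1)] by simp
    also have "\<dots> = a (f e)" using \<open>N x > 0\<close> by simp
    finally have "y * N e = a (f e)" .
    then show "y \<in> {a (f e) / N e}" using Ne
      by (simp add: field_simps)
  next
    fix y assume "y \<in> {a (f e) / N e}"
    then show "y \<in> {a (f x) / N x | x. x \<in> D \<and> x \<noteq> 0}" using eD e by auto
  qed
  then show "opnorm_on a N D f = a (f e) / N e" unfolding opnorm_on_def by simp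
qed

lemma line_gen:
  assumes V: "vector_space scale" and De: "D = range (\<lambda>k. scale k e)" and e: "e \<noteq> 0"
    and d: "d \<in> D" "d \<noteq> 0"
  shows "D = range (\<lambda>k. scale k d)"
proof -
  interpret V: vector_space scale by fact
  obtain k0 where k0: "d = scale k0 e" using De d by auto
  have k0n: "k0 \<noteq> 0" using k0 d by auto
  show ?thesis
  proof (intro equalityI subsetI)
    fix x assume "x \<in> D"
    then obtain k where "x = scale k e" using De by auto
    then have "x = scale (k / k0) d" using k0 k0n by simp
    then show "x \<in> range (\<lambda>k. scale k d)" by auto
  next
    fix x assume "x \<in> range (\<lambda>k. scale k d)"
    then obtain k where "x = scale k d" by auto
    then have "x = scale (k * k0) e" using k0 by simp
    then show "x \<in> D" using De by auto
  qed
qed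

theorem mainTheorem6:
  fixes absK :: "'k::field \<Rightarrow> real"
    and scale :: "'k \<Rightarrow> 'e::ab_group_add \<Rightarrow> 'e"
    and N :: "'e \<Rightarrow> real"
    and D :: "'e set"
  assumes "nonarch_abs absK" and "nontrivial_abs absK" and "complete_abs absK"
    and "\<not> spherically_complete_abs absK"
    and "vector_space scale" and "nonarch_norm absK scale N"
    and "finite_dim_space scale"
    and "module.subspace scale D" and "vector_space.dim scale D = 1"
  shows "(\<forall>f\<in>dual_on absK scale N D. opnorm_on absK N D f = 1 \<longrightarrow>
            (\<exists>g\<in>dual_on absK scale N UNIV. (\<forall>x\<in>D. g x = f x) \<and> opnorm_on absK N UNIV g = 1))
         \<longleftrightarrow>
         ({N d | d. d \<in> D} \<inter> value_group absK = {} \<or>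
          (\<exists>F. module.subspace scale F \<and>
               (\<forall>x. \<exists>d\<in>D. \<exists>u\<in>F. x = d + u) \<and>
               (\<forall>d\<in>D. \<forall>u\<in>F. N (d + u) = max (N d) (N u))))"
proof -
  note A = assms(1) and V = assms(5) and NN = assms(6)
  interpret V: vector_space scale by fact
  have Dsub: "V.subspace D" using assms(8) .
  obtain B where B: "B \<subseteq> D" "V.independent B" "D \<subseteq> V.span B" "card B = 1"
    using V.basis_exists[of D] assms(9) by metis
  obtain e where Be: "B = {e}" using B(4) card_1_singleton_iff by (metis One_nat_def)
  have e: "e \<noteq> 0" using B(2) Be by simp
  have eD: "e \<in> D" using B(1) Be by simp
  have De: "D = range (\<lambda>k. scale k e)"
  proof
    show "D \<subseteq> range (\<lambda>k. scale k e)" using B(3) Be V.span_singleton by simp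
    show "range (\<lambda>k. scale k e) \<subseteq> D" using eD Dsub V.subspace_scale by blast
  qed
  have Ne: "N e > 0" using norm_basic(5)[OF V A NN e] .
  have nb: "\<And>k x. N (scale k x) = absK k * N x" "\<And>x. N (- x) = N x"
    "\<And>x y. N (x + y) \<le> max (N x) (N y)" "N 0 = 0" "\<And>x. x \<noteq> 0 \<Longrightarrow> N x > 0"
    using norm_basic[OF V A NN] by auto
  show ?thesis
  proof
    assume L: "\<forall>f\<in>dual_on absK scale N D. opnorm_on absK N D f = 1 \<longrightarrow>
            (\<exists>g\<in>dual_on absK scale N UNIV. (\<forall>x\<in>D. g x = f x) \<and> opnorm_on absK N UNIV g = 1)"
    show "{N d | d. d \<in> D} \<inter> value_group absK = {} \<or>
          (\<exists>F. module.subspace scale F \<and>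
               (\<forall>x. \<exists>d\<in>D. \<exists>u\<in>F. x = d + u) \<and>
               (\<forall>d\<in>D. \<forall>u\<in>F. N (d + u) = max (N d) (N u)))"
    proof (cases "{N d | d. d \<in> D} \<inter> value_group absK = {}")
      case True then show ?thesis by simp
    next
      case False
      then obtain d c where d: "d \<in> D" "N d = absK c" "c \<noteq> 0"
        unfolding value_group_def by blast
      have dn: "d \<noteq> 0" using d nb(4) na_basic(5)[OF A d(3)] by auto
      have Dd: "D = range (\<lambda>k. scale k d)" using line_gen[OF V De e d(1) dn] .
      define coord where "coord x = (THE k. x = scale k d)" for x
      have coord: "coord (scale k d) = k" for k
        unfolding coord_def using dn by (rule_tac the_equality) auto
      define f where "f x = coord x * c" for x
      have flin: "linear_on scale D f"
        unfolding linear_on_def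
      proof (intro conjI ballI allI)
        fix x y assume "x \<in> D" "y \<in> D"
        then obtain k l where "x = scale k d" "y = scale l d" using Dd by auto
        moreover have "x + y = scale (k + l) d"
          using V.scale_left_distrib[of k l d] calculation by simp
        ultimately show "f (x + y) = f x + f y"
          unfolding f_def by (simp only: coord distrib_right)
      next
        fix m x assume "x \<in> D"
        then obtain k where "x = scale k d" using Dd by auto
        then show "f (scale m x) = m * f x" unfolding f_def using coord by simp
      qed
      have fd: "f d = c" unfolding f_def using coord[of 1] by simp
      have fnorm: "absK (f x) = N x" if xD: "x \<in> D" for x
      proof -
        obtain k where "x = scale k d" using xD Dd by auto
        then show ?thesis unfolding f_def using coord nb(1) na_basic(4)[OF A] d(2) by simp
      qed
      have fdual: "f \<in> dual_on absK scale N D"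
        unfolding dual_on_def using flin fnorm by (auto intro!: exI[of _ 1])
      have fop: "opnorm_on absK N D f = 1"
        using line_facts(2)[OF V A NN Dd dn flin] fd d(2) nb(5)[OF dn] by simp
      obtain g where g: "g \<in> dual_on absK scale N UNIV" "\<forall>x\<in>D. g x = f x"
        "opnorm_on absK N UNIV g = 1" using L fdual fop by blast
      have gadd: "\<And>x y. g (x + y) = g x + g y" and gsc: "\<And>m x. g (scale m x) = m * g x"
        using g(1) unfolding dual_on_def linear_on_def by auto
      obtain C where C: "\<And>x. absK (g x) \<le> C * N x" using g(1) unfolding dual_on_def by auto
      have g0: "g 0 = 0" using gsc[of 0 0] by simp
      have gneg: "g (- x) = - g x" for x using gsc[of "-1" x] by simp
      have gbound: "absK (g y) \<le> N y" for y
      proof (cases "y = 0")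
        case True then show ?thesis using g0 na_basic(1)[OF A] nb(4) by simp
      next
        case False
        have Ny: "N y > 0" using nb(5)[OF False] .
        have "bdd_above {absK (g x) / N x | x. x \<in> UNIV \<and> x \<noteq> 0}"
        proof (rule bdd_aboveI[of _ C])
          fix r assume "r \<in> {absK (g x) / N x | x. x \<in> UNIV \<and> x \<noteq> 0}"
          then obtain x where x: "x \<noteq> 0" "r = absK (g x) / N x" by auto
          have "N x > 0" using nb(5)[OF x(1)] .
          then show "r \<le> C" using C[of x] x(2) by (simp add: divide_le_eq)
        qed
        then have "absK (g y) / N y \<le> opnorm_on absK N UNIV g"
          unfolding opnorm_on_def using False by (auto intro!: cSup_upper)
        then show ?thesis using g(3) Ny by (simp add: divide_le_eq)
      qed
      define F where "F = {x. g x = 0}"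
      have Fsub: "V.subspace F"
        unfolding V.subspace_def F_def using g0 gadd gsc by auto
      have decomp: "\<forall>x. \<exists>d'\<in>D. \<exists>u\<in>F. x = d' + u"
      proof
        fix x
        define d' where "d' = scale (g x / c) d"
        have "d' \<in> D" unfolding d'_def using Dd by auto
        moreover have "g d' = g x" unfolding d'_def using gsc g(2) d(1) fd d(3) by simp
        then have "x - d' \<in> F" unfolding F_def using gadd[of x "- d'"] gneg by simp
        ultimately show "\<exists>d'\<in>D. \<exists>u\<in>F. x = d' + u" by (metis add.commute diff_add_cancel)
      qed
      have orth: "\<forall>d'\<in>D. \<forall>u\<in>F. N (d' + u) = max (N d') (N u)"
      proof (intro ballI)
        fix d' u assume d': "d' \<in> D" and u: "u \<in> F"
        have "g (d' + u) = f d'" using gadd u g(2) d' unfolding F_def by simp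
        then have "N d' \<le> N (d' + u)" using gbound[of "d' + u"] fnorm[OF d'] by simp
        moreover have "N u \<le> max (N (d' + u)) (N (- d'))"
          using nb(3)[of "d' + u" "- d'"] by simp
        ultimately show "N (d' + u) = max (N d') (N u)" using nb(2)[of d'] nb(3)[of d' u] by linarith
      qed
      show ?thesis using Fsub decomp orth by blast
    qed
  next
    assume R: "{N d | d. d \<in> D} \<inter> value_group absK = {} \<or>
          (\<exists>F. module.subspace scale F \<and>
               (\<forall>x. \<exists>d\<in>D. \<exists>u\<in>F. x = d + u) \<and>
               (\<forall>d\<in>D. \<forall>u\<in>F. N (d + u) = max (N d) (N u)))"
    show "\<forall>f\<in>dual_on absK scale N D. opnorm_on absK N D f = 1 \<longrightarrow>
            (\<exists>g\<in>dual_on absK scale N UNIV. (\<forall>x\<in>D. g x = f x) \<and> opnorm_on absK N UNIV g = 1)"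
    proof (intro ballI impI)
      fix f assume fdual: "f \<in> dual_on absK scale N D" and fop: "opnorm_on absK N D f = 1"
      have flin: "linear_on scale D f" using fdual unfolding dual_on_def by auto
      have fadd: "\<And>x y. x \<in> D \<Longrightarrow> y \<in> D \<Longrightarrow> f (x + y) = f x + f y"
        and fsc: "\<And>m x. x \<in> D \<Longrightarrow> f (scale m x) = m * f x"
        using flin unfolding linear_on_def by auto
      have fe: "absK (f e) = N e" using line_facts(2)[OF V A NN De e flin] fop Ne by simp
      have fnorm: "absK (f x) = N x" if "x \<in> D" for x
        using line_facts(1)[OF V A NN De e flin] that fe Ne by auto
      have fen: "f e \<noteq> 0" using fe Ne na_basic(1)[OF A] by auto
      have "N e \<in> {N d | d. d \<in> D} \<inter> value_group absK"
        using eD fe fen unfolding value_group_def by (auto intro!: exI[of _ "f e"])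
      then obtain F where F: "V.subspace F" "\<forall>x. \<exists>d\<in>D. \<exists>u\<in>F. x = d + u"
        "\<forall>d\<in>D. \<forall>u\<in>F. N (d + u) = max (N d) (N u)" using R by blast
      have DF: "z = 0" if "z \<in> D" "z \<in> F" for z
      proof -
        have "- z \<in> F" using V.subspace_neg[OF F(1) that(2)] .
        then have "N (z + - z) = max (N z) (N (- z))" using F(3) that(1) by blast
        then have "N z = 0" using nb(2)[of z] nb(4) by simp
        then show ?thesis using nb(5) by fastforce
      qed
      define proj where "proj x = (THE d. d \<in> D \<and> x - d \<in> F)" for x
      have proj: "proj (d + u) = d" if "d \<in> D" "u \<in> F" for d u
        unfolding proj_def
      proof (rule the_equality)
        show "d \<in> D \<and> d + u - d \<in> F" using that by simp
      next
        fix d' assume d': "d' \<in> D \<and> d + u - d' \<in> F"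
        have "d - d' \<in> D" using V.subspace_diff[OF Dsub that(1)] d' by blast
        moreover have "(d + u - d') - u \<in> F" using V.subspace_diff[OF F(1)] d' that(2) by blast
        moreover have "(d + u - d') - u = d - d'" by (simp add: algebra_simps)
        ultimately have "d - d' = 0" using DF by metis
        then show "d' = d" by simp
      qed
      define g where "g x = f (proj x)" for x
      have glin: "linear_on scale UNIV g"
        unfolding linear_on_def
      proof (intro conjI ballI allI)
        fix x y
        obtain d u where du: "d \<in> D" "u \<in> F" "x = d + u" using F(2) by blast
        obtain d' u' where du': "d' \<in> D" "u' \<in> F" "y = d' + u'" using F(2) by blast
        have xy: "x + y = (d + d') + (u + u')" using du du' by (simp add: algebra_simps)
        have "d + d' \<in> D" using V.subspace_add[OF Dsub du(1) du'(1)] .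
        moreover have "u + u' \<in> F" using V.subspace_add[OF F(1) du(2) du'(2)] .
        ultimately have "proj (x + y) = d + d'" unfolding xy by (rule proj)
        then show "g (x + y) = g x + g y"
          unfolding g_def using proj du du' fadd by simp
      next
        fix m x
        obtain d u where du: "d \<in> D" "u \<in> F" "x = d + u" using F(2) by blast
        have xs: "scale m x = scale m d + scale m u" using du V.scale_right_distrib by simp
        have "scale m d \<in> D" using V.subspace_scale[OF Dsub du(1)] .
        moreover have "scale m u \<in> F" using V.subspace_scale[OF F(1) du(2)] .
        ultimately have "proj (scale m x) = scale m d" unfolding xs by (rule proj)
        then show "g (scale m x) = m * g x"
          unfolding g_def using proj du fsc by simp
      qed
      have gD: "g x = f x" if "x \<in> D" for x
        unfolding g_def using proj[OF that V.subspace_0[OF F(1)]] by simp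
      have gbound: "absK (g x) \<le> N x" for x
      proof -
        obtain d u where du: "d \<in> D" "u \<in> F" "x = d + u" using F(2) by blast
        have "absK (g x) = N d" unfolding g_def using proj du fnorm by simp
        also have "\<dots> \<le> N x" using F(3) du by simp
        finally show ?thesis .
      qed
      have gdual: "g \<in> dual_on absK scale N UNIV"
        unfolding dual_on_def using glin gbound by (auto intro!: exI[of _ 1])
      have "opnorm_on absK N UNIV g = 1"
        unfolding opnorm_on_def
      proof (rule cSup_eq_maximum)
        show "1 \<in> {absK (g x) / N x | x. x \<in> UNIV \<and> x \<noteq> 0}"
          using e gD[OF eD] fe Ne by (auto intro!: exI[of _ e])
      next
        fix r assume "r \<in> {absK (g x) / N x | x. x \<in> UNIV \<and> x \<noteq> 0}"
        then obtain x where x: "x \<noteq> 0" "r = absK (g x) / N x" by auto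
        have "N x > 0" using nb(5)[OF x(1)] .
        then show "r \<le> 1" using gbound[of x] x(2) by (simp add: divide_le_eq)
      qed
      then show "\<exists>g\<in>dual_on absK scale N UNIV. (\<forall>x\<in>D. g x = f x) \<and> opnorm_on absK N UNIV g = 1"
        using gdual gD by blast
    qed
  qed
qed

end
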